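(* Let $\Pi$ be a finite, satisfiable set of linear constraints over $x_1,\dots,x_D$ and $\mathrm{CL}$ the constraint layer built from $\Pi$ and the ordering $x_1,\dots,x_D$. Then for every $\tilde x\in\mathbb{R}^D$ and every $i=1,\dots,D$ we have $ub_i\ge lb_i$, and moreover $\mathrm{CL}(\tilde x)_i=\min^i(\max^i(\tilde x_i,lb_i),ub_i)=\max^i(\min^i(\tilde x_i,ub_i),lb_i)$.
   Context: A constraint is a linear inequality $\phi:\ \sum_{k=1}^D w_k x_k + b \unrhd 0$ with $w_k,b\in\mathbb{R}$ and $\unrhd\in\{\ge,>\}$; it is strict if $\unrhd$ is $>$. A point $\tilde x\in\mathbb{R}^D$ satisfies $\phi$ if $\sum_k w_k\tilde x_k+b\unrhd 0$, and satisfies a set $\Pi$ if it satisfies every member; $\Pi$ is satisfiable if some point satisfies it. Variable $x_j$ appears positively (resp. negatively) in $\phi$ if $w_j>0$ (resp. $w_j<0$). For a set $\Gamma$ of constraints, $\Gamma^+_j$ (resp. $\Gamma^-_j$) is the subset in which $x_j$ appears positively (resp. negatively). Reduction: for $\phi^1=\sum_k w^1_kx_k+b^1\unrhd^1 0\in\Gamma^-_j$ and $\phi^2=\sum_k w^2_kx_k+b^2\unrhd^2 0\in\Gamma^+_j$, $red_j(\phi^1,\phi^2)$ is $\sum_{k\ne j}(w^1_k|w^2_j|+w^2_k|w^1_j|)x_k + b^1|w^2_j|+b^2|w^1_j| \unrhd 0$, where $\unrhd$ is $\ge$ if both $\unrhd^1,\unrhd^2$ are $\ge$, and $>$ otherwise.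 Sets $\Pi_i$: $\Pi_D=\Pi$, and for $i<D$, with $j=i+1$, $\Pi_i=(\Pi_j\setminus(\Pi^-_j\cup\Pi^+_j))\cup\{red_j(\phi^1,\phi^2):\phi^1\in\Pi^-_j,\phi^2\in\Pi^+_j\}$, where $\Pi^\pm_j$ means $(\Pi_j)^\pm_j$. (Thus only $x_1,\dots,x_i$ occur in $\Pi_i$; we write $\Pi_i^\pm$ for $(\Pi_i)^\pm_i$.) For $\phi=\sum_kw_kx_k+b\unrhd0$ with $w_i\neq0$, let $\varepsilon^\phi_i=-\sum_{k\ne i}(w_k/w_i)x_k-b/w_i$; for $\phi\in\Pi_i$ it depends only on $x_1,\dots,x_{i-1}$. Constraint layer: given $\tilde x\in\mathbb{R}^D$, $\mathrm{CL}(\tilde x)\in\mathbb{R}^D$ is computed coordinatewise for $i=1,\dots,D$. Let $\varepsilon^\phi_i(\mathrm{CL}(\tilde x))$ denote $\varepsilon^\phi_i$ evaluated at the already computed values $\mathrm{CL}(\tilde x)_1,\dots,\mathrm{CL}(\tilde x)_{i-1}$, and set $ub_i=\min\{\varepsilon^\phi_i(\mathrm{CL}(\tilde x)):\phi\in\Pi_i^-\}$, $lb_i=\max\{\varepsilon^\phi_i(\mathrm{CL}(\tilde x)):\phi\in\Pi_i^+\}$ (with $\min\emptyset=+\infty$, $\max\emptyset=-\infty$). Then $\mathrm{CL}(\tilde x)_i=\min^i(\max^i(\tilde x_i,lb_i),ub_i)$, where $\max^i(a,lb_i)$ equals $v=\max(a,lb_i)$ unless some strict $\phi\in\Pi_i^+$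 has $v=\varepsilon^\phi_i(\mathrm{CL}(\tilde x))$, in which case it equals $v+\epsilon$ for a chosen $\epsilon>0$ small enough that $lb_i+\epsilon< ub_i$; symmetrically $\min^i(a,ub_i)$ equals $u=\min(a,ub_i)$ unless some strict $\phi\in\Pi_i^-$ has $u=\varepsilon^\phi_i(\mathrm{CL}(\tilde x))$, in which case it equals $u-\epsilon$ for a chosen $\epsilon>0$ small enough that $ub_i-\epsilon>lb_i$ (the same $\epsilon$ choices being used on both sides of the displayed identity). *)

theory Defs
  imports Complex_Main "HOL-Library.Extended_Real"
begin

text \<open>A linear constraint  sum_k coef k * x_k + const (>= or >) 0 over variables
  x_1,...,x_D (indices 1..D; coefficients outside 1..D are required to be 0).\<close>
datatype lincon = LC (coef: "nat \<Rightarrow> real") (const: real) (strict: bool)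

definition lhs :: "nat \<Rightarrow> lincon \<Rightarrow> (nat \<Rightarrow> real) \<Rightarrow> real" where
  "lhs D \<phi> x = (\<Sum>k\<in>{1..D}. coef \<phi> k * x k) + const \<phi>"

definition sat :: "nat \<Rightarrow> (nat \<Rightarrow> real) \<Rightarrow> lincon \<Rightarrow> bool" where
  "sat D x \<phi> = (if strict \<phi> then lhs D \<phi> x > 0 else lhs D \<phi> x \<ge> 0)"

definition satisfiable :: "nat \<Rightarrow> lincon set \<Rightarrow> bool" where
  "satisfiable D \<Pi> = (\<exists>x. \<forall>\<phi>\<in>\<Pi>. sat D x \<phi>)"

definition posc :: "nat \<Rightarrow> lincon set \<Rightarrow> lincon set" where
  "posc j \<Gamma> = {\<phi>\<in>\<Gamma>. coef \<phi> j > 0}"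

definition negc :: "nat \<Rightarrow> lincon set \<Rightarrow> lincon set" where
  "negc j \<Gamma> = {\<phi>\<in>\<Gamma>. coef \<phi> j < 0}"

definition red :: "nat \<Rightarrow> lincon \<Rightarrow> lincon \<Rightarrow> lincon" where
  "red j \<phi>1 \<phi>2 = LC
     (\<lambda>k. if k = j then 0 else coef \<phi>1 k * \<bar>coef \<phi>2 j\<bar> + coef \<phi>2 k * \<bar>coef \<phi>1 j\<bar>)
     (const \<phi>1 * \<bar>coef \<phi>2 j\<bar> + const \<phi>2 * \<bar>coef \<phi>1 j\<bar>)
     (strict \<phi>1 \<or> strict \<phi>2)"

definition elim :: "nat \<Rightarrow> lincon set \<Rightarrow> lincon set" where
  "elim j \<Gamma> = (\<Gamma> - (negc j \<Gamma> \<union> posc j \<Gamma>)) \<union>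
     {red j \<phi>1 \<phi>2 | \<phi>1 \<phi>2. \<phi>1 \<in> negc j \<Gamma> \<and> \<phi>2 \<in> posc j \<Gamma>}"

text \<open>elimk n = Pi_{D-n}\<close>
fun elimk :: "lincon set \<Rightarrow> nat \<Rightarrow> nat \<Rightarrow> lincon set" where
  "elimk \<Pi> D 0 = \<Pi>"
| "elimk \<Pi> D (Suc n) = elim (D - n) (elimk \<Pi> D n)"

definition Pis :: "lincon set \<Rightarrow> nat \<Rightarrow> nat \<Rightarrow> lincon set" where
  "Pis \<Pi> D i = elimk \<Pi> D (D - i)"

definition epsv :: "nat \<Rightarrow> lincon \<Rightarrow> nat \<Rightarrow> (nat \<Rightarrow> real) \<Rightarrow> real" where
  "epsv D \<phi> i y = - (\<Sum>k\<in>{1..D} - {i}. (coef \<phi> k / coef \<phi> i) * y k) - const \<phi> / coef \<phi> i"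

definition lbv :: "lincon set \<Rightarrow> nat \<Rightarrow> nat \<Rightarrow> (nat \<Rightarrow> real) \<Rightarrow> ereal" where
  "lbv \<Pi> D i y = Sup ((\<lambda>\<phi>. ereal (epsv D \<phi> i y)) ` posc i (Pis \<Pi> D i))"

definition ubv :: "lincon set \<Rightarrow> nat \<Rightarrow> nat \<Rightarrow> (nat \<Rightarrow> real) \<Rightarrow> ereal" where
  "ubv \<Pi> D i y = Inf ((\<lambda>\<phi>. ereal (epsv D \<phi> i y)) ` negc i (Pis \<Pi> D i))"

definition maxi :: "lincon set \<Rightarrow> nat \<Rightarrow> nat \<Rightarrow> (nat \<Rightarrow> real) \<Rightarrow> real \<Rightarrow> real \<Rightarrow> real" where
  "maxi \<Pi> D i y e a =
     (let v = max (ereal a) (lbv \<Pi> D i y) in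
      if (\<exists>\<phi>\<in>posc i (Pis \<Pi> D i). strict \<phi> \<and> v = ereal (epsv D \<phi> i y))
      then real_of_ereal v + e else real_of_ereal v)"

definition mini :: "lincon set \<Rightarrow> nat \<Rightarrow> nat \<Rightarrow> (nat \<Rightarrow> real) \<Rightarrow> real \<Rightarrow> real \<Rightarrow> real" where
  "mini \<Pi> D i y e a =
     (let u = min (ereal a) (ubv \<Pi> D i y) in
      if (\<exists>\<phi>\<in>negc i (Pis \<Pi> D i). strict \<phi> \<and> u = ereal (epsv D \<phi> i y))
      then real_of_ereal u - e else real_of_ereal u)"

text \<open>Coordinates 1..i of CL(x), computed in order; ep i / em i are the epsilons
  chosen for max^i / min^i at coordinate i. Coordinates > i are 0 (not yet computed).\<close>
fun clvec :: "lincon set \<Rightarrow> nat \<Rightarrow> (nat \<Rightarrow> real) \<Rightarrow> (nat \<Rightarrow> real) \<Rightarrow> (nat \<Rightarrow> real)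
               \<Rightarrow> nat \<Rightarrow> (nat \<Rightarrow> real)" where
  "clvec \<Pi> D x ep em 0 = (\<lambda>_. 0)"
| "clvec \<Pi> D x ep em (Suc i) =
     (let y = clvec \<Pi> D x ep em i in
      y(Suc i := mini \<Pi> D (Suc i) y (em (Suc i)) (maxi \<Pi> D (Suc i) y (ep (Suc i)) (x (Suc i)))))"

definition CL :: "lincon set \<Rightarrow> nat \<Rightarrow> (nat \<Rightarrow> real) \<Rightarrow> (nat \<Rightarrow> real) \<Rightarrow> (nat \<Rightarrow> real)
               \<Rightarrow> (nat \<Rightarrow> real)" where
  "CL \<Pi> D x ep em = clvec \<Pi> D x ep em D"

end

theory Submission
  imports Defs
begin


lemma realcore:
  fixes l u a ep em :: real
  assumes "l \<le> u" "sp \<Longrightarrow> l < u" "sn \<Longrightarrow> l < u" "l < u \<Longrightarrow> l + ep < u \<and> l < u - em" "ep > 0" "em > 0"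
  defines "M \<equiv> \<lambda>a. (if sp \<and> a \<le> l then l + ep else max a l)"
  defines "N \<equiv> \<lambda>a. (if sn \<and> u \<le> a then u - em else min a u)"
  shows "l \<le> N (M a) \<and> (sp \<longrightarrow> l < N (M a)) \<and> N (M a) \<le> u \<and> (sn \<longrightarrow> N (M a) < u) \<and> N (M a) = M (N a)"
  using assms(1-6) unfolding M_def N_def
  by (cases "a \<le> l"; cases "u \<le> a"; cases sp; cases sn; cases "l < u") (auto simp: max_def min_def)

definition amx :: "lincon set \<Rightarrow> (lincon \<Rightarrow> real) \<Rightarrow> real \<Rightarrow> real \<Rightarrow> real" where
 "amx P f e a = (let v = max (ereal a) (Sup ((\<lambda>\<phi>. ereal (f \<phi>)) ` P)) in
     if (\<exists>\<phi>\<in>P. strict \<phi> \<and> v = ereal (f \<phi>)) then real_of_ereal v + e else real_of_ereal v)"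
definition amn :: "lincon set \<Rightarrow> (lincon \<Rightarrow> real) \<Rightarrow> real \<Rightarrow> real \<Rightarrow> real" where
 "amn P f e a = (let v = min (ereal a) (Inf ((\<lambda>\<phi>. ereal (f \<phi>)) ` P)) in
     if (\<exists>\<phi>\<in>P. strict \<phi> \<and> v = ereal (f \<phi>)) then real_of_ereal v - e else real_of_ereal v)"

lemma amx_empty: "amx {} f e a = a" by (simp add: amx_def)
lemma amn_empty: "amn {} f e a = a" by (simp add: amn_def)

lemma Sup_att: assumes "p0 \<in> P" "\<forall>p\<in>P. f p \<le> f p0"
  shows "Sup ((\<lambda>\<phi>. ereal (f \<phi>)) ` P) = ereal (f p0)"
  by (rule antisym) (auto intro!: SUP_least SUP_upper2[OF assms(1)] simp: assms(2))
lemma Inf_att: assumes "p0 \<in> P" "\<forall>p\<in>P. f p0 \<le> f p"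
  shows "Inf ((\<lambda>\<phi>. ereal (f \<phi>)) ` P) = ereal (f p0)"
  by (rule antisym) (auto intro!: INF_greatest INF_lower2[OF assms(1)] simp: assms(2))

lemma amx_eval: assumes "p0 \<in> P" "\<forall>p\<in>P. f p \<le> f p0"
  shows "amx P f e a = (if (\<exists>p\<in>P. strict p \<and> f p = f p0) \<and> a \<le> f p0 then f p0 + e else max a (f p0))"
proof -
  have m: "max (ereal a) (ereal (f p0)) = ereal (max a (f p0))" by (simp add: max_def)
  have "(\<exists>\<phi>\<in>P. strict \<phi> \<and> max a (f p0) = f \<phi>) = ((\<exists>p\<in>P. strict p \<and> f p = f p0) \<and> a \<le> f p0)"
  proof
    assume "\<exists>\<phi>\<in>P. strict \<phi> \<and> max a (f p0) = f \<phi>"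
    then obtain \<phi> where "\<phi> \<in> P" "strict \<phi>" "max a (f p0) = f \<phi>" by blast
    moreover have "f \<phi> \<le> f p0" using assms(2) \<open>\<phi> \<in> P\<close> by blast
    ultimately show "(\<exists>p\<in>P. strict p \<and> f p = f p0) \<and> a \<le> f p0" by (metis max.cobounded1 max.cobounded2 order_antisym order.trans)
  next
    assume "(\<exists>p\<in>P. strict p \<and> f p = f p0) \<and> a \<le> f p0"
    then show "\<exists>\<phi>\<in>P. strict \<phi> \<and> max a (f p0) = f \<phi>" by (metis max.absorb2)
  qed
  then show ?thesis unfolding amx_def Sup_att[OF assms] m Let_def by (auto simp: max_def)
qed

lemma amn_eval: assumes "p0 \<in> P" "\<forall>p\<in>P. f p0 \<le> f p"
  shows "amn P f e a = (if (\<exists>p\<in>P. strict p \<and> f p = f p0) \<and> f p0 \<le> a then f p0 - e else min a (f p0))"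
proof -
  have m: "min (ereal a) (ereal (f p0)) = ereal (min a (f p0))" by (simp add: min_def)
  have "(\<exists>\<phi>\<in>P. strict \<phi> \<and> min a (f p0) = f \<phi>) = ((\<exists>p\<in>P. strict p \<and> f p = f p0) \<and> f p0 \<le> a)"
  proof
    assume "\<exists>\<phi>\<in>P. strict \<phi> \<and> min a (f p0) = f \<phi>"
    then obtain \<phi> where "\<phi> \<in> P" "strict \<phi>" "min a (f p0) = f \<phi>" by blast
    moreover have "f p0 \<le> f \<phi>" using assms(2) \<open>\<phi> \<in> P\<close> by blast
    ultimately show "(\<exists>p\<in>P. strict p \<and> f p = f p0) \<and> f p0 \<le> a" by (metis min.cobounded1 min.cobounded2 order_antisym order.trans)
  next
    assume "(\<exists>p\<in>P. strict p \<and> f p = f p0) \<and> f p0 \<le> a"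
    then show "\<exists>\<phi>\<in>P. strict \<phi> \<and> min a (f p0) = f \<phi>" by (metis min.absorb2)
  qed
  then show ?thesis unfolding amn_def Inf_att[OF assms] m Let_def by (auto simp: min_def)
qed

lemma fin_max: fixes f :: "lincon \<Rightarrow> real" assumes "finite P" "P \<noteq> {}" shows "\<exists>p0\<in>P. \<forall>p\<in>P. f p \<le> f p0"
proof -
  have "Max (f ` P) \<in> f ` P" using assms by simp
  then obtain p0 where p0: "p0 \<in> P" "f p0 = Max (f ` P)" by auto
  have "\<forall>p\<in>P. f p \<le> f p0" using p0(2) Max_ge[OF finite_imageI[OF assms(1)]] by auto
  then show ?thesis using p0(1) by blast
qed
lemma fin_min: fixes f :: "lincon \<Rightarrow> real" assumes "finite P" "P \<noteq> {}" shows "\<exists>p0\<in>P. \<forall>p\<in>P. f p0 \<le> f p"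
proof -
  have "Min (f ` P) \<in> f ` P" using assms by simp
  then obtain p0 where p0: "p0 \<in> P" "f p0 = Min (f ` P)" by auto
  have "\<forall>p\<in>P. f p0 \<le> f p" using p0(2) Min_le[OF finite_imageI[OF assms(1)]] by auto
  then show ?thesis using p0(1) by blast
qed

lemma bound_up: fixes f :: "lincon \<Rightarrow> real"
  assumes "\<forall>p\<in>P. f p \<le> f p0" "f p0 \<le> c" "(\<exists>p\<in>P. strict p \<and> f p = f p0) \<Longrightarrow> f p0 < c"
  shows "\<forall>p\<in>P. f p \<le> c \<and> (strict p \<longrightarrow> f p < c)"
proof
  fix p assume p: "p \<in> P"
  have "f p \<le> f p0" using p assms(1) by blast
  moreover have "strict p \<Longrightarrow> f p < c"
  proof -
    assume s: "strict p"
    show "f p < c"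
    proof (cases "f p = f p0")
      case True then show ?thesis using assms(3) p s by auto
    next
      case False then show ?thesis using \<open>f p \<le> f p0\<close> assms(2) by linarith
    qed
  qed
  ultimately show "f p \<le> c \<and> (strict p \<longrightarrow> f p < c)" using assms(2) by auto
qed

lemma bound_down: fixes f :: "lincon \<Rightarrow> real"
  assumes "\<forall>p\<in>P. f p0 \<le> f p" "c \<le> f p0" "(\<exists>p\<in>P. strict p \<and> f p = f p0) \<Longrightarrow> c < f p0"
  shows "\<forall>p\<in>P. c \<le> f p \<and> (strict p \<longrightarrow> c < f p)"
proof
  fix p assume p: "p \<in> P"
  have "f p0 \<le> f p" using p assms(1) by blast
  moreover have "strict p \<Longrightarrow> c < f p"
  proof -
    assume s: "strict p"
    show "c < f p"
    proof (cases "f p = f p0")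
      case True then show ?thesis using assms(3) p s by auto
    next
      case False then show ?thesis using \<open>f p0 \<le> f p\<close> assms(2) by linarith
    qed
  qed
  ultimately show "c \<le> f p \<and> (strict p \<longrightarrow> c < f p)" using assms(2) by auto
qed

lemma absmain:
  fixes P N :: "lincon set" and f :: "lincon \<Rightarrow> real" and a ep em :: real
  assumes fin: "finite P" "finite N"
    and pair: "\<forall>p\<in>P. \<forall>n\<in>N. f p \<le> f n \<and> (strict p \<or> strict n \<longrightarrow> f p < f n)"
    and pos: "ep > 0" "em > 0"
    and eps: "Sup ((\<lambda>\<phi>. ereal (f \<phi>)) ` P) < Inf ((\<lambda>\<phi>. ereal (f \<phi>)) ` N) \<longrightarrow>
        Sup ((\<lambda>\<phi>. ereal (f \<phi>)) ` P) + ereal ep < Inf ((\<lambda>\<phi>. ereal (f \<phi>)) ` N)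
      \<and> Inf ((\<lambda>\<phi>. ereal (f \<phi>)) ` N) - ereal em > Sup ((\<lambda>\<phi>. ereal (f \<phi>)) ` P)"
  defines "c \<equiv> amn N f em (amx P f ep a)"
  shows "Sup ((\<lambda>\<phi>. ereal (f \<phi>)) ` P) \<le> Inf ((\<lambda>\<phi>. ereal (f \<phi>)) ` N)
     \<and> (\<forall>p\<in>P. f p \<le> c \<and> (strict p \<longrightarrow> f p < c))
     \<and> (\<forall>n\<in>N. c \<le> f n \<and> (strict n \<longrightarrow> c < f n))
     \<and> c = amx P f ep (amn N f em a)"
proof (cases "P = {}")
  case PE: True
  show ?thesis
  proof (cases "N = {}")
    case True
    then show ?thesis using PE by (simp add: c_def amx_empty amn_empty)
  next
    case False
    then obtain n0 where n0: "n0 \<in> N" "\<forall>n\<in>N. f n0 \<le> f n" using fin_min[OF fin(2)] by blast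
    let ?sn = "\<exists>p\<in>N. strict p \<and> f p = f n0"
    have c: "c = (if ?sn \<and> f n0 \<le> a then f n0 - em else min a (f n0))"
      unfolding c_def PE amx_empty amn_eval[OF n0] ..
    have "\<forall>n\<in>N. c \<le> f n \<and> (strict n \<longrightarrow> c < f n)"
      by (rule bound_down[OF n0(2)]) (use pos in \<open>auto simp: c min_def\<close>)
    then show ?thesis using PE by (simp add: c_def amx_empty)
  qed
next
  case PN: False
  then obtain p0 where p0: "p0 \<in> P" "\<forall>p\<in>P. f p \<le> f p0" using fin_max[OF fin(1)] by blast
  let ?sp = "\<exists>p\<in>P. strict p \<and> f p = f p0"
  have mx: "\<And>a. amx P f ep a = (if ?sp \<and> a \<le> f p0 then f p0 + ep else max a (f p0))"
    using amx_eval[OF p0] .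
  show ?thesis
  proof (cases "N = {}")
    case True
    have c: "c = (if ?sp \<and> a \<le> f p0 then f p0 + ep else max a (f p0))"
      unfolding c_def True amn_empty mx ..
    have "\<forall>p\<in>P. f p \<le> c \<and> (strict p \<longrightarrow> f p < c)"
      by (rule bound_up[OF p0(2)]) (use pos in \<open>auto simp: c max_def\<close>)
    then show ?thesis using True by (simp add: c_def amn_empty)
  next
    case False
    then obtain n0 where n0: "n0 \<in> N" "\<forall>n\<in>N. f n0 \<le> f n" using fin_min[OF fin(2)] by blast
    let ?sn = "\<exists>p\<in>N. strict p \<and> f p = f n0"
    have mn: "\<And>a. amn N f em a = (if ?sn \<and> f n0 \<le> a then f n0 - em else min a (f n0))"
      using amn_eval[OF n0] .
    have L: "Sup ((\<lambda>\<phi>. ereal (f \<phi>)) ` P) = ereal (f p0)" using Sup_att[OF p0] .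
    have U: "Inf ((\<lambda>\<phi>. ereal (f \<phi>)) ` N) = ereal (f n0)" using Inf_att[OF n0] .
    have lu: "f p0 \<le> f n0" using pair p0 n0 by blast
    have a1: "?sp \<Longrightarrow> f p0 < f n0" using pair p0 n0 by metis
    have a2: "?sn \<Longrightarrow> f p0 < f n0" using pair p0 n0 by metis
    have a3: "f p0 < f n0 \<Longrightarrow> f p0 + ep < f n0 \<and> f p0 < f n0 - em" using eps unfolding L U by simp
    note R = realcore[where sp="\<exists>p\<in>P. strict p \<and> f p = f p0" and sn="\<exists>p\<in>N. strict p \<and> f p = f n0" and a=a, OF lu a1 a2 a3 pos]
    have c: "c = amn N f em (amx P f ep a)" by (simp add: c_def)
    have R': "f p0 \<le> c \<and> (?sp \<longrightarrow> f p0 < c) \<and> c \<le> f n0 \<and> (?sn \<longrightarrow> c < f n0) \<and> c = amx P f ep (amn N f em a)"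
      unfolding c mx mn by (rule R)
    have P1: "\<forall>p\<in>P. f p \<le> c \<and> (strict p \<longrightarrow> f p < c)"
      by (rule bound_up[OF p0(2)]) (use R' in auto)
    have N1: "\<forall>n\<in>N. c \<le> f n \<and> (strict n \<longrightarrow> c < f n)"
      by (rule bound_down[OF n0(2)]) (use R' in auto)
    show ?thesis using P1 N1 R' lu unfolding L U by simp
  qed
qed



lemma finite_elim: "finite S \<Longrightarrow> finite (elim j S)"
proof -
  assume f: "finite S"
  have "elim j S \<subseteq> S \<union> (\<lambda>(a,b). red j a b) ` (S \<times> S)"
    unfolding elim_def negc_def posc_def by auto
  moreover have "finite (S \<union> (\<lambda>(a,b). red j a b) ` (S \<times> S))" using f by simp
  ultimately show ?thesis by (rule finite_subset)
qed

lemma finite_elimk: "finite \<Pi> \<Longrightarrow> finite (elimk \<Pi> D n)"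
  by (induction n) (auto intro: finite_elim)

lemma coef_elimk:
  assumes "\<forall>\<phi>\<in>\<Pi>. \<forall>k. (k = 0 \<or> D < k) \<longrightarrow> coef \<phi> k = 0"
  shows "\<phi> \<in> elimk \<Pi> D n \<Longrightarrow> k = 0 \<or> D - n < k \<Longrightarrow> coef \<phi> k = 0"
proof (induction n arbitrary: \<phi> k)
  case 0
  then show ?case using assms by auto
next
  case (Suc n)
  from Suc.prems(1) have "\<phi> \<in> elim (D - n) (elimk \<Pi> D n)" by simp
  then consider "\<phi> \<in> elimk \<Pi> D n" "\<not> coef \<phi> (D - n) < 0" "\<not> coef \<phi> (D - n) > 0"
    | \<phi>1 \<phi>2 where "\<phi> = red (D - n) \<phi>1 \<phi>2" "\<phi>1 \<in> elimk \<Pi> D n" "\<phi>2 \<in> elimk \<Pi> D n"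
    unfolding elim_def negc_def posc_def by blast
  then show ?case
  proof cases
    case 1
    show ?thesis
    proof (cases "k = D - n")
      case True then show ?thesis using 1 by simp
    next
      case False
      then have "k = 0 \<or> D - n < k" using Suc.prems(2) by auto
      then show ?thesis using Suc.IH 1 by blast
    qed
  next
    case 2
    show ?thesis
    proof (cases "k = D - n")
      case True then show ?thesis using 2 by (simp add: red_def)
    next
      case False
      then have "k = 0 \<or> D - n < k" using Suc.prems(2) by auto
      then show ?thesis using Suc.IH 2 by (simp add: red_def)
    qed
  qed
qed

lemma coef_Pis:
  assumes "\<forall>\<phi>\<in>\<Pi>. \<forall>k. (k = 0 \<or> D < k) \<longrightarrow> coef \<phi> k = 0" "i \<le> D" "\<phi> \<in> Pis \<Pi> D i" "k = 0 \<or> i < k"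
  shows "coef \<phi> k = 0"
  using coef_elimk[OF assms(1), of \<phi> "D - i" k] assms(2-4) unfolding Pis_def by auto

lemma Pis_pred: "1 \<le> i \<Longrightarrow> i \<le> D \<Longrightarrow> Pis \<Pi> D (i - 1) = elim i (Pis \<Pi> D i)"
proof -
  assume "1 \<le> i" "i \<le> D"
  then have "D - (i - 1) = Suc (D - i)" "D - (D - i) = i" by auto
  then show ?thesis unfolding Pis_def by simp
qed

lemma lhs_red:
  assumes "coef \<phi>1 j < 0" "coef \<phi>2 j > 0"
  shows "lhs D (red j \<phi>1 \<phi>2) y = \<bar>coef \<phi>2 j\<bar> * lhs D \<phi>1 y + \<bar>coef \<phi>1 j\<bar> * lhs D \<phi>2 y"
proof -
  have c: "\<And>k. coef (red j \<phi>1 \<phi>2) k = coef \<phi>1 k * \<bar>coef \<phi>2 j\<bar> + coef \<phi>2 k * \<bar>coef \<phi>1 j\<bar>"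
    using assms by (auto simp: red_def)
  show ?thesis unfolding lhs_def c
    by (simp add: red_def sum.distrib sum_distrib_left algebra_simps)
qed

lemma sat_red:
  assumes "sat D y \<phi>1" "sat D y \<phi>2" "coef \<phi>1 j < 0" "coef \<phi>2 j > 0"
  shows "sat D y (red j \<phi>1 \<phi>2)"
proof -
  have A: "\<bar>coef \<phi>2 j\<bar> > 0" "\<bar>coef \<phi>1 j\<bar> > 0" using assms(3,4) by auto
  have s: "strict (red j \<phi>1 \<phi>2) = (strict \<phi>1 \<or> strict \<phi>2)" by (simp add: red_def)
  have l1: "lhs D \<phi>1 y \<ge> 0" "strict \<phi>1 \<Longrightarrow> lhs D \<phi>1 y > 0" using assms(1) unfolding sat_def by (auto split: if_splits)
  have l2: "lhs D \<phi>2 y \<ge> 0" "strict \<phi>2 \<Longrightarrow> lhs D \<phi>2 y > 0" using assms(2) unfolding sat_def by (auto split: if_splits)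
  have p1: "\<bar>coef \<phi>2 j\<bar> * lhs D \<phi>1 y \<ge> 0" "strict \<phi>1 \<Longrightarrow> \<bar>coef \<phi>2 j\<bar> * lhs D \<phi>1 y > 0"
    using A l1 by auto
  have p2: "\<bar>coef \<phi>1 j\<bar> * lhs D \<phi>2 y \<ge> 0" "strict \<phi>2 \<Longrightarrow> \<bar>coef \<phi>1 j\<bar> * lhs D \<phi>2 y > 0"
    using A l2 by auto
  show ?thesis unfolding sat_def s lhs_red[OF assms(3,4)] using p1 p2 by auto
qed

lemma sat_elim: "\<forall>\<phi>\<in>S. sat D y \<phi> \<Longrightarrow> \<forall>\<phi>\<in>elim j S. sat D y \<phi>"
  unfolding elim_def negc_def posc_def by (auto intro: sat_red)

lemma sat_elimk: "\<forall>\<phi>\<in>\<Pi>. sat D y \<phi> \<Longrightarrow> \<forall>\<phi>\<in>elimk \<Pi> D n. sat D y \<phi>"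
  by (induction n) (auto dest: sat_elim)

lemma lhs_eps:
  assumes "i \<in> {1..D}" "coef \<phi> i \<noteq> 0"
  shows "lhs D \<phi> y = coef \<phi> i * (y i - epsv D \<phi> i y)"
proof -
  let ?S = "{1..D} - {i}"
  have "lhs D \<phi> y = coef \<phi> i * y i + (\<Sum>k\<in>?S. coef \<phi> k * y k) + const \<phi>"
    unfolding lhs_def using assms(1) by (simp add: sum.remove)
  moreover have "coef \<phi> i * epsv D \<phi> i y = - (\<Sum>k\<in>?S. coef \<phi> k * y k) - const \<phi>"
  proof -
    have "coef \<phi> i * epsv D \<phi> i y = - (\<Sum>k\<in>?S. coef \<phi> i * ((coef \<phi> k / coef \<phi> i) * y k)) - coef \<phi> i * (const \<phi> / coef \<phi> i)"
      unfolding epsv_def by (simp add: sum_distrib_left right_diff_distrib)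
    also have "\<dots> = - (\<Sum>k\<in>?S. coef \<phi> k * y k) - const \<phi>"
      using assms(2) by simp
    finally show ?thesis .
  qed
  ultimately show ?thesis by (simp add: right_diff_distrib)
qed

lemma pair_lemma:
  assumes "i \<in> {1..D}" "\<forall>\<phi>\<in>Pis \<Pi> D (i - 1). sat D y \<phi>"
    "\<phi>1 \<in> negc i (Pis \<Pi> D i)" "\<phi>2 \<in> posc i (Pis \<Pi> D i)"
  shows "epsv D \<phi>2 i y \<le> epsv D \<phi>1 i y \<and> (strict \<phi>2 \<or> strict \<phi>1 \<longrightarrow> epsv D \<phi>2 i y < epsv D \<phi>1 i y)"
proof -
  have c1: "coef \<phi>1 i < 0" and c2: "coef \<phi>2 i > 0" using assms(3,4) by (auto simp: negc_def posc_def)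
  have "red i \<phi>1 \<phi>2 \<in> elim i (Pis \<Pi> D i)" using assms(3,4) unfolding elim_def by blast
  then have "red i \<phi>1 \<phi>2 \<in> Pis \<Pi> D (i - 1)" using Pis_pred[of i D \<Pi>] assms(1) by simp
  then have s: "sat D y (red i \<phi>1 \<phi>2)" using assms(2) by blast
  let ?e1 = "epsv D \<phi>1 i y" and ?e2 = "epsv D \<phi>2 i y"
  have "lhs D (red i \<phi>1 \<phi>2) y = \<bar>coef \<phi>2 i\<bar> * (coef \<phi>1 i * (y i - ?e1)) + \<bar>coef \<phi>1 i\<bar> * (coef \<phi>2 i * (y i - ?e2))"
    using lhs_red[OF c1 c2] lhs_eps[OF assms(1)] c1 c2 by simp
  also have "\<dots> = (- coef \<phi>1 i * coef \<phi>2 i) * (?e1 - ?e2)"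
    using c1 c2 by (simp add: abs_of_neg abs_of_pos algebra_simps)
  finally have l: "lhs D (red i \<phi>1 \<phi>2) y = (- coef \<phi>1 i * coef \<phi>2 i) * (?e1 - ?e2)" .
  have pp: "- coef \<phi>1 i * coef \<phi>2 i > 0" using c1 c2 by (simp add: mult_neg_pos)
  have st: "strict (red i \<phi>1 \<phi>2) = (strict \<phi>1 \<or> strict \<phi>2)" by (simp add: red_def)
  show ?thesis
  proof (cases "strict \<phi>1 \<or> strict \<phi>2")
    case True
    then have "lhs D (red i \<phi>1 \<phi>2) y > 0" using s st unfolding sat_def by simp
    then have "?e1 - ?e2 > 0" using l pp zero_less_mult_pos by metis
    then show ?thesis by auto
  next
    case False
    then have "lhs D (red i \<phi>1 \<phi>2) y \<ge> 0" using s st unfolding sat_def by simp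
    then have "?e1 - ?e2 \<ge> 0" using l pp by (metis linorder_not_le mult_pos_neg order_less_imp_not_less)
    then show ?thesis using False by auto
  qed
qed

lemma clvec_agree: "k \<le> m \<Longrightarrow> m \<le> n \<Longrightarrow> clvec \<Pi> D x ep em n k = clvec \<Pi> D x ep em m k"
proof (induction n)
  case 0 then show ?case by simp
next
  case (Suc n)
  show ?case
  proof (cases "m = Suc n")
    case True then show ?thesis by simp
  next
    case False
    then have "m \<le> n" using Suc.prems by simp
    then show ?thesis using Suc by (simp add: Let_def)
  qed
qed

lemma epsv_agree:
  assumes "\<forall>k. 0 < k \<and> k < i \<longrightarrow> y k = y' k" "\<forall>k. i < k \<longrightarrow> coef \<phi> k = 0"
  shows "epsv D \<phi> i y = epsv D \<phi> i y'"
proof -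
  have "(\<Sum>k\<in>{1..D} - {i}. (coef \<phi> k / coef \<phi> i) * y k) = (\<Sum>k\<in>{1..D} - {i}. (coef \<phi> k / coef \<phi> i) * y' k)"
  proof (rule sum.cong)
    fix k assume k: "k \<in> {1..D} - {i}"
    show "(coef \<phi> k / coef \<phi> i) * y k = (coef \<phi> k / coef \<phi> i) * y' k"
    proof (cases "k < i")
      case True then show ?thesis using assms(1) k by auto
    next
      case False then have "i < k" using k by auto
      then show ?thesis using assms(2) by simp
    qed
  qed simp
  then show ?thesis unfolding epsv_def by simp
qed

lemma maxi_agree:
  assumes "\<forall>\<phi>\<in>Pis \<Pi> D i. epsv D \<phi> i y = epsv D \<phi> i y'"
  shows "maxi \<Pi> D i y = maxi \<Pi> D i y'" "mini \<Pi> D i y = mini \<Pi> D i y'"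
proof -
  have P: "\<forall>\<phi>\<in>posc i (Pis \<Pi> D i). epsv D \<phi> i y = epsv D \<phi> i y'" using assms by (auto simp: posc_def)
  have N: "\<forall>\<phi>\<in>negc i (Pis \<Pi> D i). epsv D \<phi> i y = epsv D \<phi> i y'" using assms by (auto simp: negc_def)
  have l: "lbv \<Pi> D i y = lbv \<Pi> D i y'" unfolding lbv_def using P by (metis (no_types, lifting) image_cong)
  have u: "ubv \<Pi> D i y = ubv \<Pi> D i y'" unfolding ubv_def using N by (metis (no_types, lifting) image_cong)
  show "maxi \<Pi> D i y = maxi \<Pi> D i y'"
    unfolding maxi_def[abs_def] l using P by (intro ext) (simp cong: bex_cong)
  show "mini \<Pi> D i y = mini \<Pi> D i y'"
    unfolding mini_def[abs_def] u using N by (intro ext) (simp cong: bex_cong)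
qed

lemma maxi_amx: "maxi \<Pi> D i y e a = amx (posc i (Pis \<Pi> D i)) (\<lambda>\<phi>. epsv D \<phi> i y) e a"
  unfolding maxi_def amx_def lbv_def ..
lemma mini_amn: "mini \<Pi> D i y e a = amn (negc i (Pis \<Pi> D i)) (\<lambda>\<phi>. epsv D \<phi> i y) e a"
  unfolding mini_def amn_def ubv_def ..



theorem corollary1:
  fixes D :: nat and \<Pi> :: "lincon set" and x ep em :: "nat \<Rightarrow> real"
  assumes "finite \<Pi>"
    and "\<forall>\<phi>\<in>\<Pi>. \<forall>k. (k = 0 \<or> D < k) \<longrightarrow> coef \<phi> k = 0"
    and "satisfiable D \<Pi>"
    and "\<forall>i\<in>{1..D}. ep i > 0 \<and> em i > 0
          \<and> (lbv \<Pi> D i (CL \<Pi> D x ep em) < ubv \<Pi> D i (CL \<Pi> D x ep em) \<longrightarrow>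
               lbv \<Pi> D i (CL \<Pi> D x ep em) + ereal (ep i) < ubv \<Pi> D i (CL \<Pi> D x ep em)
             \<and> ubv \<Pi> D i (CL \<Pi> D x ep em) - ereal (em i) > lbv \<Pi> D i (CL \<Pi> D x ep em))"
  shows "\<forall>i\<in>{1..D}.
           lbv \<Pi> D i (CL \<Pi> D x ep em) \<le> ubv \<Pi> D i (CL \<Pi> D x ep em)
         \<and> CL \<Pi> D x ep em i
             = mini \<Pi> D i (CL \<Pi> D x ep em) (em i) (maxi \<Pi> D i (CL \<Pi> D x ep em) (ep i) (x i))
         \<and> CL \<Pi> D x ep em i
             = maxi \<Pi> D i (CL \<Pi> D x ep em) (ep i) (mini \<Pi> D i (CL \<Pi> D x ep em) (em i) (x i))"
proof -
  define y where "y = CL \<Pi> D x ep em"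
  have step: "lbv \<Pi> D i y \<le> ubv \<Pi> D i y
         \<and> y i = mini \<Pi> D i y (em i) (maxi \<Pi> D i y (ep i) (x i))
         \<and> y i = maxi \<Pi> D i y (ep i) (mini \<Pi> D i y (em i) (x i))
         \<and> (\<forall>\<phi>\<in>Pis \<Pi> D i. sat D y \<phi>)"
    if i: "i \<in> {1..D}" and Q: "\<forall>\<phi>\<in>Pis \<Pi> D (i - 1). sat D y \<phi>" for i
  proof -
    define S where "S = Pis \<Pi> D i"
    define P where "P = posc i S"
    define N where "N = negc i S"
    define f where "f = (\<lambda>\<phi>. epsv D \<phi> i y)"
    have finS: "finite S" unfolding S_def Pis_def using finite_elimk[OF assms(1)] .
    have finP: "finite P" unfolding P_def posc_def using finS by simp
    have finN: "finite N" unfolding N_def negc_def using finS by simp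
    have pair: "\<forall>p\<in>P. \<forall>n\<in>N. f p \<le> f n \<and> (strict p \<or> strict n \<longrightarrow> f p < f n)"
      using pair_lemma[OF i Q] unfolding P_def N_def S_def f_def by blast
    have pos: "ep i > 0" "em i > 0" using assms(4) i by auto
    have eps: "Sup ((\<lambda>\<phi>. ereal (f \<phi>)) ` P) < Inf ((\<lambda>\<phi>. ereal (f \<phi>)) ` N) \<longrightarrow>
        Sup ((\<lambda>\<phi>. ereal (f \<phi>)) ` P) + ereal (ep i) < Inf ((\<lambda>\<phi>. ereal (f \<phi>)) ` N)
      \<and> Inf ((\<lambda>\<phi>. ereal (f \<phi>)) ` N) - ereal (em i) > Sup ((\<lambda>\<phi>. ereal (f \<phi>)) ` P)"
      using assms(4) i unfolding lbv_def ubv_def P_def N_def S_def f_def y_def by blast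
    note M = absmain[OF finP finN pair pos eps, where a="x i"]
    have LU: "lbv \<Pi> D i y = Sup ((\<lambda>\<phi>. ereal (f \<phi>)) ` P)" "ubv \<Pi> D i y = Inf ((\<lambda>\<phi>. ereal (f \<phi>)) ` N)"
      unfolding lbv_def ubv_def P_def N_def S_def f_def by auto
    have mx: "\<And>e a. maxi \<Pi> D i y e a = amx P f e a" unfolding maxi_amx P_def S_def f_def ..
    have mn: "\<And>e a. mini \<Pi> D i y e a = amn N f e a" unfolding mini_amn N_def S_def f_def ..
    define z where "z = clvec \<Pi> D x ep em (i - 1)"
    have yi: "y i = mini \<Pi> D i z (em i) (maxi \<Pi> D i z (ep i) (x i))"
    proof -
      have "y i = clvec \<Pi> D x ep em i i" unfolding y_def CL_def using i by (intro clvec_agree) auto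
      also have "\<dots> = mini \<Pi> D i z (em i) (maxi \<Pi> D i z (ep i) (x i))"
      proof -
        obtain j where j: "i = Suc j" using i by (cases i) auto
        show ?thesis unfolding z_def j by (simp add: Let_def)
      qed
      finally show ?thesis .
    qed
    have agree: "\<forall>\<phi>\<in>Pis \<Pi> D i. epsv D \<phi> i z = epsv D \<phi> i y"
    proof
      fix \<phi> assume \<phi>: "\<phi> \<in> Pis \<Pi> D i"
      show "epsv D \<phi> i z = epsv D \<phi> i y"
      proof (rule epsv_agree)
        show "\<forall>k. 0 < k \<and> k < i \<longrightarrow> z k = y k"
          unfolding z_def y_def CL_def using i by (auto intro!: clvec_agree[symmetric])
        show "\<forall>k. i < k \<longrightarrow> coef \<phi> k = 0" using coef_Pis[OF assms(2) _ \<phi>] i by auto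
      qed
    qed
    have yi2: "y i = mini \<Pi> D i y (em i) (maxi \<Pi> D i y (ep i) (x i))"
      using yi maxi_agree[OF agree] by simp
    have c: "y i = amn N f (em i) (amx P f (ep i) (x i))" using yi2 mx mn by simp
    have Qi: "\<forall>\<phi>\<in>S. sat D y \<phi>"
    proof
      fix \<phi> assume \<phi>: "\<phi> \<in> S"
      consider "coef \<phi> i = 0" | "coef \<phi> i > 0" | "coef \<phi> i < 0" by linarith
      then show "sat D y \<phi>"
      proof cases
        case 1
        then have "\<phi> \<in> elim i S" using \<phi> unfolding elim_def negc_def posc_def by auto
        then have "\<phi> \<in> Pis \<Pi> D (i - 1)" using Pis_pred[of i D \<Pi>] i unfolding S_def by simp
        then show ?thesis using Q by blast
      next
        case 2
        then have "\<phi> \<in> P" using \<phi> unfolding P_def posc_def by auto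
        then have "f \<phi> \<le> y i \<and> (strict \<phi> \<longrightarrow> f \<phi> < y i)" using M c by auto
        moreover have "lhs D \<phi> y = coef \<phi> i * (y i - f \<phi>)" unfolding f_def using lhs_eps[OF i] 2 by simp
        ultimately show ?thesis using 2 unfolding sat_def by (auto intro: mult_pos_pos mult_nonneg_nonneg)
      next
        case 3
        then have "\<phi> \<in> N" using \<phi> unfolding N_def negc_def by auto
        then have "y i \<le> f \<phi> \<and> (strict \<phi> \<longrightarrow> y i < f \<phi>)" using M c by auto
        moreover have "lhs D \<phi> y = coef \<phi> i * (y i - f \<phi>)" unfolding f_def using lhs_eps[OF i] 3 by simp
        ultimately show ?thesis using 3 unfolding sat_def by (auto intro: mult_neg_neg mult_nonpos_nonpos)
      qed
    qed
    show ?thesis using M c yi2 Qi unfolding LU mx mn S_def by simp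
  qed
  obtain w where w: "\<forall>\<phi>\<in>\<Pi>. sat D w \<phi>" using assms(3) unfolding satisfiable_def by blast
  have Q: "\<forall>\<phi>\<in>Pis \<Pi> D i. sat D y \<phi>" if "i \<le> D" for i
    using that
  proof (induction i)
    case 0
    show ?case
    proof
      fix \<phi> assume \<phi>: "\<phi> \<in> Pis \<Pi> D 0"
      have "\<And>k. coef \<phi> k = 0" using coef_Pis[OF assms(2) _ \<phi>] by auto
      then have "lhs D \<phi> y = lhs D \<phi> w" unfolding lhs_def by simp
      moreover have "sat D w \<phi>" using sat_elimk[OF w] \<phi> unfolding Pis_def by blast
      ultimately show "sat D y \<phi>" unfolding sat_def by simp
    qed
  next
    case (Suc i)
    then have "Suc i \<in> {1..D}" by simp
    then show ?case using step[of "Suc i"] Suc by simp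
  qed
  show ?thesis
  proof
    fix i assume i: "i \<in> {1..D}"
    then have "\<forall>\<phi>\<in>Pis \<Pi> D (i - 1). sat D y \<phi>" using Q[of "i - 1"] i by auto
    then show "lbv \<Pi> D i (CL \<Pi> D x ep em) \<le> ubv \<Pi> D i (CL \<Pi> D x ep em)
         \<and> CL \<Pi> D x ep em i
             = mini \<Pi> D i (CL \<Pi> D x ep em) (em i) (maxi \<Pi> D i (CL \<Pi> D x ep em) (ep i) (x i))
         \<and> CL \<Pi> D x ep em i
             = maxi \<Pi> D i (CL \<Pi> D x ep em) (ep i) (mini \<Pi> D i (CL \<Pi> D x ep em) (em i) (x i))"
      using step[OF i] unfolding y_def by blast
  qed
qed

end
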